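(* Let $\mathcal{X}=\prod_{r=1}^d\mathcal{Z}_r$ be a product of nonempty convex compact subsets of Euclidean spaces, $F$ an $L$-Lipschitz operator on $\mathcal{X}$ with components $F_r$, $B_F:=\max_r\sup_{x}\|F_r(x)\|_2$, and suppose the average $(\alpha,\ell,h)$-generalized Minty property holds. Then the iterates of rescaled optimistic gradient descent with learning rate $\eta\le\frac14\sqrt{\frac{\ell}{h^3L^2+hB_F^2\alpha^2d}}$ satisfy, for every $T\in\mathbb{N}$, $$\sum_{t=1}^T\Big(\|x^{(t)}-\hat x^{(t)}\|_2^2+\|x^{(t)}-\hat x^{(t+1)}\|_2^2\Big)\le\frac{2D_{\mathcal{X}}^2h}{\ell}.$$
   Context: $D_{\mathcal{X}}$ is the $\ell_2$ diameter of $\mathcal{X}$. $\mathbf{1}_{\mathcal{Z}_r}$ is the indicator vector of the coordinates of $\mathcal{Z}_r$; $\circ$ is the coordinatewise product; vector inequalities are coordinatewise. $A(x)=\sum_r a_r(x)\mathbf{1}_{\mathcal{Z}_r}$ with each $a_r$ $\alpha$-Lipschitz and $0<\ell\le A(x)\le h$; $W(x)=\sum_r w_r(x)\mathbf{1}_{\mathcal{Z}_r}$ with $0<\ell\le W(x)\le h$. The average $(\alpha,\ell,h)$-generalized Minty property: for every $T$ and sequence $(x^{(t)})_{t\le T}$ in $\mathcal{X}$ there is $x^\star\in\mathcal{X}$ with $\sum_{t=1}^T\langle x^{(t)}-x^\star,F(x^{(t)})\circ A(x^{(t)})\circ W(x^\star)\rangle\ge0$. Rescaled optimistic gradient descent: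 from arbitrary $x^{(0)}=\hat x^{(1)}\in\mathcal{X}$, $x^{(t)}=\Pi_{\mathcal{X}}(\hat x^{(t)}-\eta A(x^{(t-1)})\circ F(x^{(t-1)}))$ and $\hat x^{(t+1)}=\Pi_{\mathcal{X}}(\hat x^{(t)}-\eta A(x^{(t)})\circ F(x^{(t)}))$ for $t\ge1$, $\Pi_{\mathcal{X}}$ the Euclidean projection. *)

theory Defs
  imports "HOL-Analysis.Analysis"
begin

text \<open>Coordinates of the ambient space real^'n are partitioned into blocks
  1..d via blk; block r carries the factor Z_r.\<close>

definition ind_vec :: "('n::finite \<Rightarrow> nat) \<Rightarrow> nat \<Rightarrow> real^'n" where
  "ind_vec blk r = (\<chi> i. if blk i = r then 1 else 0)"

definition block_proj :: "('n::finite \<Rightarrow> nat) \<Rightarrow> nat \<Rightarrow> real^'n \<Rightarrow> real^'n" where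
  "block_proj blk r v = ind_vec blk r * v"

definition block_vec :: "('n::finite \<Rightarrow> nat) \<Rightarrow> nat \<Rightarrow> (nat \<Rightarrow> real) \<Rightarrow> real^'n" where
  "block_vec blk d c = (\<Sum>r\<in>{1..d}. c r *\<^sub>R ind_vec blk r)"

definition block_space :: "('n::finite \<Rightarrow> nat) \<Rightarrow> nat \<Rightarrow> (real^'n) set" where
  "block_space blk r = {v. \<forall>i. blk i \<noteq> r \<longrightarrow> v $ i = 0}"

definition block_prod :: "('n::finite \<Rightarrow> nat) \<Rightarrow> nat \<Rightarrow> (nat \<Rightarrow> (real^'n) set) \<Rightarrow> (real^'n) set" where
  "block_prod blk d Z = {x. \<forall>r\<in>{1..d}. block_proj blk r x \<in> Z r}"

definition block_bound :: "('n::finite \<Rightarrow> nat) \<Rightarrow> nat \<Rightarrow> (real^'n) set \<Rightarrow> (real^'n \<Rightarrow> real^'n) \<Rightarrow> real" where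
  "block_bound blk d X F = Max ((\<lambda>r. SUP x\<in>X. norm (block_proj blk r (F x))) ` {1..d})"

end

theory Submission
  imports Defs
begin

lemma bv_nth: "blk i \<in> {1..d} \<Longrightarrow> block_vec blk d c $ i = c (blk i)"
  unfolding block_vec_def ind_vec_def
  by (simp add: sum_component if_distrib[of "\<lambda>x. _ * x"] cong: if_cong)

lemma bp_nth: "block_proj blk r v $ i = (if blk i = r then v$i else 0)"
  unfolding block_proj_def ind_vec_def by simp

lemma group_sum:
  fixes f :: "'n::finite \<Rightarrow> real" and blk :: "'n \<Rightarrow> nat"
  assumes "\<forall>i. blk i \<in> {1..d}"
  shows "(\<Sum>i\<in>UNIV. f i) = (\<Sum>r\<in>{1..d}. \<Sum>i\<in>UNIV. if blk i = r then f i else 0)"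
proof -
  have "(\<Sum>r\<in>{1..d}. \<Sum>i\<in>UNIV. if blk i = r then f i else 0)
      = (\<Sum>i\<in>UNIV. \<Sum>r\<in>{1..d}. if blk i = r then f i else 0)"
    by (rule sum.swap)
  also have "\<dots> = (\<Sum>i\<in>UNIV. f i)"
  proof (intro sum.cong refl)
    fix i
    have "blk i \<in> {1..d}" using assms by blast
    then show "(\<Sum>r\<in>{1..d}. if blk i = r then f i else 0) = f i"
      by (subst sum.delta') auto
  qed
  finally show ?thesis by simp
qed

lemma norm_comp_le:
  fixes u v :: "real^'n"
  assumes "\<forall>i. \<bar>u$i\<bar> \<le> \<bar>v$i\<bar>"
  shows "norm u \<le> norm v"
  unfolding norm_le inner_vec_def
  using assms by (intro sum_mono) (simp add: abs_le_square_iff power2_eq_square)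

lemma bp_linear: "linear (block_proj blk r)"
  by (rule linearI) (auto simp: vec_eq_iff bp_nth)

lemma bp_add: "block_proj blk r (u + v) = block_proj blk r u + block_proj blk r v"
  by (auto simp: vec_eq_iff bp_nth)
lemma bp_diff: "block_proj blk r (u - v) = block_proj blk r u - block_proj blk r v"
  by (auto simp: vec_eq_iff bp_nth)
lemma bp_scale: "block_proj blk r (c *\<^sub>R u) = c *\<^sub>R block_proj blk r u"
  by (auto simp: vec_eq_iff bp_nth)

lemma X_convex:
  assumes "\<forall>r\<in>{1..d}. convex (Z r)"
  shows "convex (block_prod blk d Z)"
  unfolding convex_def block_prod_def
  using assms by (auto simp: bp_add bp_scale convex_def)

lemma X_closed:
  assumes "\<forall>r\<in>{1..d}. compact (Z r)"
  shows "closed (block_prod blk d Z)"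
proof -
  have eq: "block_prod blk d Z = (\<Inter>r\<in>{1..d}. block_proj blk r -` Z r)"
    unfolding block_prod_def by auto
  have "closed (block_proj blk r -` Z r)" if "r \<in> {1..d}" for r
  proof (rule continuous_closed_vimage)
    show "closed (Z r)" using assms that compact_imp_closed by blast
    show "continuous (at x) (block_proj blk r)" for x
      using bp_linear[of blk r] linear_conv_bounded_linear linear_continuous_at by blast
  qed
  then show ?thesis unfolding eq by blast
qed

lemma X_ne:
  fixes blk :: "'n::finite \<Rightarrow> nat"
  assumes "\<forall>r\<in>{1..d}. Z r \<subseteq> block_space blk r" "\<forall>r\<in>{1..d}. Z r \<noteq> {}"
    and "\<forall>i. blk i \<in> {1..d}"
  shows "block_prod blk d Z \<noteq> {}"
proof -
  define z where "z = (\<lambda>r. SOME v. v \<in> Z r)"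
  have z: "\<forall>r\<in>{1..d}. z r \<in> Z r" using assms(2) unfolding z_def by (metis some_in_eq)
  define x where "x = (\<chi> i. z (blk i) $ i)"
  have "block_proj blk r x = z r" if r: "r \<in> {1..d}" for r
  proof -
    have "z r \<in> block_space blk r" using z assms(1) r by blast
    then show ?thesis by (auto simp: vec_eq_iff bp_nth x_def block_space_def)
  qed
  then have "x \<in> block_prod blk d Z" using z unfolding block_prod_def by auto
  then show ?thesis by blast
qed

lemma X_bounded:
  fixes blk :: "'n::finite \<Rightarrow> nat"
  assumes "\<forall>r\<in>{1..d}. compact (Z r)" "\<forall>i. blk i \<in> {1..d}"
  shows "bounded (block_prod blk d Z)"
proof -
  have "bounded (\<Union>r\<in>{1..d}. Z r)"
    using assms(1) by (auto intro!: bounded_UN compact_imp_bounded)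
  then obtain R where R: "\<And>r v. r \<in> {1..d} \<Longrightarrow> v \<in> Z r \<Longrightarrow> norm v \<le> R"
    unfolding bounded_iff by blast
  have "norm x \<le> real CARD('n) * R" if x: "x \<in> block_prod blk d Z" for x
  proof -
    have "\<bar>x $ i\<bar> \<le> R" for i
    proof -
      have "block_proj blk (blk i) x \<in> Z (blk i)" using x assms(2) unfolding block_prod_def by blast
      then have "norm (block_proj blk (blk i) x) \<le> R" using R assms(2) by blast
      moreover have "\<bar>block_proj blk (blk i) x $ i\<bar> \<le> norm (block_proj blk (blk i) x)"
        by (rule component_le_norm_cart)
      ultimately show ?thesis by (simp add: bp_nth)
    qed
    then have "(\<Sum>i\<in>UNIV. \<bar>x$i\<bar>) \<le> (\<Sum>i\<in>(UNIV::'n set). R)" by (intro sum_mono) auto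
    then show ?thesis using norm_le_l1_cart[of x] by simp
  qed
  then show ?thesis unfolding bounded_iff by blast
qed

lemma X_replace:
  assumes "p \<in> block_prod blk d Z" "z \<in> block_prod blk d Z"
  shows "p + block_proj blk r (z - p) \<in> block_prod blk d Z"
proof -
  have "block_proj blk r' (p + block_proj blk r (z - p)) = (if r' = r then block_proj blk r' z else block_proj blk r' p)" for r'
    by (auto simp: vec_eq_iff bp_nth)
  then show ?thesis using assms unfolding block_prod_def by auto
qed

lemma weighted_vi:
  fixes blk :: "'n::finite \<Rightarrow> nat"
  assumes blk: "\<forall>i. blk i \<in> {1..d}" and cv: "convex X" and cl: "closed X"
    and X: "X = block_prod blk d Z"
    and z: "z \<in> X" and c: "\<forall>r\<in>{1..d}. 0 \<le> c r"
  shows "((y - closest_point X y) * block_vec blk d c) \<bullet> (z - closest_point X y) \<le> 0"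
proof -
  define p where "p = closest_point X y"
  have pX: "p \<in> X" unfolding p_def using z cl closest_point_in_set by blast
  have vi: "(y - p) \<bullet> (block_proj blk r (z - p)) \<le> 0" for r
  proof -
    have "p + block_proj blk r (z - p) \<in> X" using X_replace pX z X by blast
    from closest_point_dot[OF cv cl this, of y] show ?thesis by (simp add: p_def)
  qed
  have "((y - p) * block_vec blk d c) \<bullet> (z - p)
      = (\<Sum>i\<in>UNIV. c (blk i) * ((y - p)$i * (z - p)$i))"
    unfolding inner_vec_def using blk by (intro sum.cong refl) (simp add: bv_nth)
  also have "\<dots> = (\<Sum>r\<in>{1..d}. \<Sum>i\<in>UNIV. if blk i = r then c (blk i) * ((y - p)$i * (z - p)$i) else 0)"
    by (rule group_sum[OF blk])
  also have "\<dots> = (\<Sum>r\<in>{1..d}. c r * ((y - p) \<bullet> (block_proj blk r (z - p))))"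
    unfolding inner_vec_def sum_distrib_left
    by (intro sum.cong refl) (auto simp: bp_nth)
  also have "\<dots> \<le> 0"
    using c vi by (intro sum_nonpos) (simp add: mult_nonneg_nonpos)
  finally show ?thesis by (simp add: p_def)
qed

lemma step_ineq:
  fixes p q s x G H W :: "real^'n::finite" and \<eta> :: real
  assumes VI1: "((p - \<eta> *\<^sub>R G - q) * W) \<bullet> (s - q) \<le> 0"
    and VI2: "((p - \<eta> *\<^sub>R H - x) * W) \<bullet> (q - x) \<le> 0"
  shows "\<eta> * ((G * W) \<bullet> (x - s)) \<le> 1/2 * (((p - s) * W) \<bullet> (p - s) - ((q - s) * W) \<bullet> (q - s))
     - 1/2 * (((x - p) * W) \<bullet> (x - p) + ((x - q) * W) \<bullet> (x - q)) + \<eta> * (((G - H) * W) \<bullet> (x - q))"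
proof -
  have eq: "1/2 * (((p - s) * W) \<bullet> (p - s) - ((q - s) * W) \<bullet> (q - s))
     - 1/2 * (((x - p) * W) \<bullet> (x - p) + ((x - q) * W) \<bullet> (x - q)) + \<eta> * (((G - H) * W) \<bullet> (x - q))
     - \<eta> * ((G * W) \<bullet> (x - s))
     = - (((p - \<eta> *\<^sub>R G - q) * W) \<bullet> (s - q)) - (((p - \<eta> *\<^sub>R H - x) * W) \<bullet> (q - x))"
    unfolding inner_vec_def
    by (simp add: sum_subtractf[symmetric] sum.distrib[symmetric] sum_distrib_left sum_negf[symmetric] algebra_simps)
  show ?thesis using eq VI1 VI2 by linarith
qed

lemma norm_sq_sum: "norm (v::real^'n::finite)^2 = (\<Sum>i\<in>UNIV. (v$i)^2)"
  unfolding power2_norm_eq_inner inner_vec_def by (simp add: power2_eq_square)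

lemma wn_lower:
  fixes u W :: "real^'n::finite"
  assumes "\<forall>i. l \<le> W$i"
  shows "l * norm u ^2 \<le> (u * W) \<bullet> u"
proof -
  have "l * norm u^2 = (\<Sum>i\<in>UNIV. l * (u$i)^2)" by (simp add: norm_sq_sum sum_distrib_left)
  also have "\<dots> \<le> (\<Sum>i\<in>UNIV. (u*W)$i * u$i)"
  proof (intro sum_mono)
    fix i
    have "l * (u$i)^2 \<le> W$i * (u$i)^2" using assms by (intro mult_right_mono) auto
    then show "l * (u$i)^2 \<le> (u*W)$i * u$i" by (simp add: power2_eq_square algebra_simps)
  qed
  also have "\<dots> = (u*W) \<bullet> u" by (simp add: inner_vec_def)
  finally show ?thesis .
qed

lemma wn_cs:
  fixes u v W :: "real^'n::finite"
  assumes "\<forall>i. 0 \<le> W$i \<and> W$i \<le> h"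
  shows "(u * W) \<bullet> v \<le> h * norm u * norm v"
proof -
  have h0: "0 \<le> h" using assms by (meson order_trans)
  have "norm (u * W) \<le> norm (h *\<^sub>R u)"
    using assms h0 by (intro norm_comp_le) (auto simp: abs_mult mult.commute intro!: mult_right_mono)
  moreover note h0
  ultimately have "norm (u * W) \<le> h * norm u" by simp
  then have "(u * W) \<bullet> v \<le> h * norm u * norm v"
    using norm_cauchy_schwarz[of "u * W" v] by (meson mult_right_mono norm_ge_zero order_trans)
  then show ?thesis .
qed

lemma wn_upper:
  fixes u W :: "real^'n::finite"
  assumes "\<forall>i. 0 \<le> W$i \<and> W$i \<le> h"
  shows "(u * W) \<bullet> u \<le> h * norm u ^2"
  using wn_cs[OF assms, of u u] by (simp add: power2_eq_square mult.assoc)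

lemma dg_bound:
  fixes blk :: "'n::finite \<Rightarrow> nat" and F :: "real^'n \<Rightarrow> real^'n"
  assumes blk: "\<forall>i. blk i \<in> {1..d}"
    and Ab: "\<forall>i. 0 \<le> block_vec blk d (\<lambda>r. a r y) $ i \<and> block_vec blk d (\<lambda>r. a r y) $ i \<le> h"
    and FL: "norm (F y - F y') \<le> L * norm (y - y')"
    and aL: "\<forall>r\<in>{1..d}. \<bar>a r y - a r y'\<bar> \<le> \<alpha> * norm (y - y')"
    and Bd: "\<forall>r\<in>{1..d}. norm (block_proj blk r (F y')) \<le> B"
    and h0: "0 \<le> h" and L0: "0 \<le> L" and a0: "0 \<le> \<alpha>"
  shows "norm (block_vec blk d (\<lambda>r. a r y) * F y - block_vec blk d (\<lambda>r. a r y') * F y')^2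
    \<le> 2 * (h^2 * L^2 + \<alpha>^2 * B^2 * real d) * norm (y - y')^2"
proof -
  define E where "E = norm (y - y')"
  define Ay where "Ay = block_vec blk d (\<lambda>r. a r y)"
  define Ay' where "Ay' = block_vec blk d (\<lambda>r. a r y')"
  define u where "u = Ay * (F y - F y')"
  define v where "v = (Ay - Ay') * F y'"
  have eq: "Ay * F y - Ay' * F y' = u + v" unfolding u_def v_def by (simp add: algebra_simps)
  have "norm u \<le> norm (h *\<^sub>R (F y - F y'))"
    unfolding u_def using Ab h0 by (intro norm_comp_le) (auto simp: Ay_def abs_mult intro!: mult_right_mono)
  also have "\<dots> \<le> h * (L * E)" using h0 FL by (simp add: E_def mult_left_mono)
  finally have nu: "norm u \<le> h * L * E" by simp
  have nu2: "norm u ^2 \<le> (h * L * E)^2" using nu by (simp add: power_mono)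
  have "norm v ^2 = (\<Sum>i\<in>UNIV. (a (blk i) y - a (blk i) y')^2 * (F y' $ i)^2)"
    unfolding norm_sq_sum v_def Ay_def Ay'_def using blk
    by (intro sum.cong refl) (simp add: bv_nth power_mult_distrib)
  also have "\<dots> \<le> (\<Sum>i\<in>UNIV. (\<alpha> * E)^2 * (F y' $ i)^2)"
  proof (intro sum_mono mult_right_mono)
    fix i
    have "\<bar>a (blk i) y - a (blk i) y'\<bar> \<le> \<alpha> * E" using aL blk E_def by blast
    then show "(a (blk i) y - a (blk i) y')^2 \<le> (\<alpha> * E)^2"
      by (metis abs_ge_zero order_trans power2_abs power_mono)
  qed simp
  also have "\<dots> = (\<alpha> * E)^2 * (\<Sum>r\<in>{1..d}. \<Sum>i\<in>UNIV. if blk i = r then (F y' $ i)^2 else 0)"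
    by (simp only: sum_distrib_left[symmetric] group_sum[OF blk, symmetric])
  also have "\<dots> = (\<alpha> * E)^2 * (\<Sum>r\<in>{1..d}. norm (block_proj blk r (F y'))^2)"
    by (simp add: norm_sq_sum bp_nth if_distrib[of "\<lambda>x. x^2"] cong: if_cong)
  also have "\<dots> \<le> (\<alpha> * E)^2 * (\<Sum>r\<in>{1..d}. B^2)"
    using Bd by (intro mult_left_mono sum_mono power_mono) auto
  finally have "norm v ^2 \<le> (\<alpha> * E)^2 * (\<Sum>r\<in>{1..d}. B^2)" .
  then have nv2: "norm v ^2 \<le> \<alpha>^2 * B^2 * real d * E^2" by (simp add: power_mult_distrib mult_ac)
  have "norm (u + v)^2 \<le> (norm u + norm v)^2"
    by (simp add: norm_triangle_ineq power_mono)
  also have "\<dots> \<le> 2 * norm u ^2 + 2 * norm v^2"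
    by (simp add: power2_sum) (smt (verit) sum_squares_bound)
  finally show ?thesis
    using nu2 nv2 unfolding eq[unfolded Ay_def Ay'_def] E_def
    by (simp add: power_mult_distrib algebra_simps)
qed

lemma telescope_sum: "(\<Sum>t=1..T. (f t - f (t+1))) = f 1 - f (T+1::nat)" for f :: "nat \<Rightarrow> real"
  by (induction T) auto

lemma shift_sum:
  fixes f :: "nat \<Rightarrow> real"
  assumes "f 0 = 0" "\<forall>t. 0 \<le> f t"
  shows "(\<Sum>t=1..T. f (t-1)) \<le> (\<Sum>t=1..T. f t)"
proof -
  have "(\<Sum>t=1..T. f (t-1)) + f T \<le> (\<Sum>t=1..T. f t) + f 0" for T
    by (induction T) auto
  from this[of T] assms(1) assms(2)[rule_format, of T] show ?thesis by linarith
qed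

lemma final_arith:
  fixes D1 DT l SA SB SC K :: real
  assumes "0 \<le> 1/2*(D1 - DT) - l/2*(SA+SB) + l/4*(SA+SC)" "SC \<le> SB" "0 \<le> DT" "D1 \<le> K" "0 < l"
  shows "l/4*(SA+SB) \<le> 1/2*K"
proof -
  have m: "l/4*SC \<le> l/4*SB" using assms by (intro mult_left_mono) auto
  have id: "1/2*(D1 - DT) - l/2*(SA+SB) + l/4*(SA+SC) = 1/2*D1 - 1/2*DT - l/4*(SA+SB) + (l/4*SC - l/4*SB)"
    by (simp add: field_simps)
  show ?thesis using assms(1,3,4) m unfolding id by linarith
qed

lemma step_arith:
  fixes E P WA WB Er l a b c :: real
  assumes "E \<le> P - 1/2*(WA+WB) + Er" "l*a \<le> WA" "l*b \<le> WB" "Er \<le> l/4*(a + c)"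
  shows "E \<le> P - l/2*(a+b) + l/4*(a+c)"
proof -
  have 1: "l/2*(a+b) = (l*a + l*b)/2" by (simp add: field_simps)
  have 2: "E \<le> P - 1/2*(WA+WB) + l/4*(a + c)" using assms(1,4) by linarith
  have 3: "(l*a + l*b)/2 \<le> 1/2*(WA+WB)" using add_mono[OF assms(2,3)] by simp
  show ?thesis unfolding 1 using 2 3 by linarith
qed

lemma sq_sum_le: "(a + b)^2 \<le> 2 * (a^2 + b^2)" for a b :: real
proof -
  have "0 \<le> (a - b)^2" by simp
  then show ?thesis by (simp add: power2_eq_square algebra_simps)
qed

theorem corollary2:
  fixes blk :: "'n::finite \<Rightarrow> nat" and d :: nat
    and Z :: "nat \<Rightarrow> (real^'n) set"
    and F :: "real^'n \<Rightarrow> real^'n"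
    and a w :: "nat \<Rightarrow> real^'n \<Rightarrow> real"
    and L \<alpha> l h \<eta> :: real
    and x xh :: "nat \<Rightarrow> real^'n"
  assumes blk_range: "\<forall>i. blk i \<in> {1..d}"
    and blk_nonempty: "\<forall>r\<in>{1..d}. \<exists>i. blk i = r"
    and Z_sub: "\<forall>r\<in>{1..d}. Z r \<subseteq> block_space blk r"
    and Z_ne: "\<forall>r\<in>{1..d}. Z r \<noteq> {}"
    and Z_convex: "\<forall>r\<in>{1..d}. convex (Z r)"
    and Z_compact: "\<forall>r\<in>{1..d}. compact (Z r)"
    and F_lip: "L-lipschitz_on (block_prod blk d Z) F"
    and a_lip: "\<forall>r\<in>{1..d}. \<alpha>-lipschitz_on (block_prod blk d Z) (a r)"
    and l_pos: "0 < l"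
    and A_bounds: "\<forall>y\<in>block_prod blk d Z. \<forall>i.
        l \<le> block_vec blk d (\<lambda>r. a r y) $ i \<and> block_vec blk d (\<lambda>r. a r y) $ i \<le> h"
    and W_bounds: "\<forall>y\<in>block_prod blk d Z. \<forall>i.
        l \<le> block_vec blk d (\<lambda>r. w r y) $ i \<and> block_vec blk d (\<lambda>r. w r y) $ i \<le> h"
    and minty: "\<forall>(T::nat) (xs::nat \<Rightarrow> real^'n). (\<forall>t\<in>{1..T}. xs t \<in> block_prod blk d Z) \<longrightarrow>
        (\<exists>xstar\<in>block_prod blk d Z. 0 \<le> (\<Sum>t=1..T. (xs t - xstar) \<bullet>
           (F (xs t) * block_vec blk d (\<lambda>r. a r (xs t)) * block_vec blk d (\<lambda>r. w r xstar))))"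
    and \<eta>_pos: "0 < \<eta>"
    and \<eta>_le: "\<eta> \<le> 1/4 * sqrt (l / (h^3 * L^2 + h * (block_bound blk d (block_prod blk d Z) F)^2 * \<alpha>^2 * real d))"
    and x0: "x 0 \<in> block_prod blk d Z"
    and xh1: "xh 1 = x 0"
    and step_x: "\<forall>t\<ge>1. x t = closest_point (block_prod blk d Z)
        (xh t - \<eta> *\<^sub>R (block_vec blk d (\<lambda>r. a r (x (t - 1))) * F (x (t - 1))))"
    and step_xh: "\<forall>t\<ge>1. xh (t + 1) = closest_point (block_prod blk d Z)
        (xh t - \<eta> *\<^sub>R (block_vec blk d (\<lambda>r. a r (x t)) * F (x t)))"
  shows "\<forall>T::nat. (\<Sum>t=1..T. norm (x t - xh t)^2 + norm (x t - xh (t + 1))^2)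
           \<le> 2 * (diameter (block_prod blk d Z))^2 * h / l"
proof (intro allI)
  fix T :: nat
  define X where "X = block_prod blk d Z"
  have cvX: "convex X" unfolding X_def using X_convex Z_convex by blast
  have clX: "closed X" unfolding X_def using X_closed Z_compact by blast
  have neX: "X \<noteq> {}" unfolding X_def using X_ne Z_sub Z_ne blk_range by blast
  have bdX: "bounded X" unfolding X_def using X_bounded Z_compact blk_range by blast
  have l_le_h: "l \<le> h"
  proof -
    have "l \<le> block_vec blk d (\<lambda>r. a r (x 0)) $ i \<and> block_vec blk d (\<lambda>r. a r (x 0)) $ i \<le> h" for i
      using A_bounds x0 by blast
    then show ?thesis by (meson order_trans)
  qed
  have h0: "0 < h" using l_le_h l_pos by linarith
  have L0: "0 \<le> L" using F_lip lipschitz_on_nonneg by blast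
  have d1: "1 \<le> d" using blk_range by auto
  have a0: "0 \<le> \<alpha>" using a_lip d1 lipschitz_on_nonneg by fastforce
  have a_bd: "l \<le> a r y \<and> a r y \<le> h" if yX: "y \<in> X" and rd: "r \<in> {1..d}" for y r
  proof -
    obtain i where bi: "blk i = r" using blk_nonempty rd by blast
    have e: "block_vec blk d (\<lambda>r. a r y) $ i = a r y" using bv_nth[of blk i d "\<lambda>r. a r y"] blk_range bi rd by simp
    have "l \<le> block_vec blk d (\<lambda>r. a r y) $ i \<and> block_vec blk d (\<lambda>r. a r y) $ i \<le> h"
      using A_bounds yX unfolding X_def by blast
    then show ?thesis using e by simp
  qed
  have xX: "x t \<in> X" for t
  proof (cases "t = 0")
    case True then show ?thesis using x0 X_def by simp
  next
    case False
    then have "x t = closest_point X (xh t - \<eta> *\<^sub>R (block_vec blk d (\<lambda>r. a r (x (t - 1))) * F (x (t - 1))))"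
      using step_x[rule_format, of t] unfolding X_def by simp
    then show ?thesis using clX neX closest_point_in_set by metis
  qed
  have xhX: "xh t \<in> X" if "1 \<le> t" for t
  proof (cases "t = 1")
    case True then show ?thesis using x0 xh1 X_def by simp
  next
    case False
    then have "xh t = closest_point X (xh (t-1) - \<eta> *\<^sub>R (block_vec blk d (\<lambda>r. a r (x (t-1))) * F (x (t-1))))"
      using step_xh[rule_format, of "t-1"] that X_def by simp
    then show ?thesis using clX neX closest_point_in_set by metis
  qed
  define B where "B = block_bound blk d X F"
  have Bd: "norm (block_proj blk r (F y)) \<le> B" if "y \<in> X" "r \<in> {1..d}" for y r
  proof -
    have nbp: "norm (block_proj blk r v) \<le> norm v" for v :: "real^'n"
      by (intro norm_comp_le) (simp add: bp_nth)
    have "norm (block_proj blk r (F z)) \<le> norm (F (x 0)) + L * diameter X" if "z \<in> X" for z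
    proof -
      have "norm (F z) - norm (F (x 0)) \<le> dist (F z) (F (x 0))"
        by (metis dist_norm norm_triangle_ineq2)
      also have "\<dots> \<le> L * dist z (x 0)" using F_lip that xX[of 0] unfolding X_def lipschitz_on_def by blast
      also have "\<dots> \<le> L * diameter X" using diameter_bounded_bound[OF bdX that xX[of 0]] L0 by (simp add: mult_left_mono)
      finally show ?thesis using nbp[of "F z"] by linarith
    qed
    then have bdd: "bdd_above ((\<lambda>z. norm (block_proj blk r (F z))) ` X)" by (intro bdd_aboveI2) 
    have "norm (block_proj blk r (F y)) \<le> (SUP z\<in>X. norm (block_proj blk r (F z)))"
      using cSUP_upper[OF that(1) bdd] .
    also have "\<dots> \<le> B" unfolding B_def block_bound_def using that(2) by (intro Max_ge) auto
    finally show ?thesis .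
  qed
  define M where "M = h^3 * L^2 + h * B^2 * \<alpha>^2 * real d"
  have eta_M: "16 * \<eta>^2 * M \<le> l"
  proof -
    have M0: "0 \<le> M" unfolding M_def using h0 by simp
    have "M \<noteq> 0"
    proof
      assume "M = 0"
      then have "\<eta> \<le> 0" using \<eta>_le unfolding M_def B_def X_def by simp
      then show False using \<eta>_pos by simp
    qed
    then have Mp: "0 < M" using M0 by simp
    have "4 * \<eta> \<le> sqrt (l / M)" using \<eta>_le unfolding M_def B_def X_def by simp
    then have "(4 * \<eta>)^2 \<le> (sqrt (l / M))^2" using \<eta>_pos by (intro power_mono) auto
    also have "\<dots> = l / M" using Mp l_pos by simp
    finally have "16 * \<eta>^2 \<le> l / M" by (simp add: power_mult_distrib)
    then show ?thesis using Mp by (simp add: pos_le_divide_eq)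
  qed
  have "\<forall>t\<in>{1..T}. x t \<in> block_prod blk d Z" using xX X_def by blast
  then obtain xs where xsX: "xs \<in> X" and minT: "0 \<le> (\<Sum>t=1..T. (x t - xs) \<bullet>
           (F (x t) * block_vec blk d (\<lambda>r. a r (x t)) * block_vec blk d (\<lambda>r. w r xs)))"
    using minty X_def by blast
  define Wv where "Wv = block_vec blk d (\<lambda>r. w r xs)"
  have Wb: "\<forall>i. l \<le> Wv$i \<and> Wv$i \<le> h" using W_bounds xsX unfolding Wv_def X_def by blast
  have Wb0: "\<forall>i. 0 \<le> Wv$i \<and> Wv$i \<le> h"
  proof
    fix i show "0 \<le> Wv$i \<and> Wv$i \<le> h" using Wb[rule_format, of i] l_pos by linarith
  qed
  have w0: "\<forall>r\<in>{1..d}. 0 \<le> w r xs"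
  proof
    fix r assume r: "r \<in> {1..d}"
    obtain i where bi: "blk i = r" using blk_nonempty r by blast
    have e: "Wv $ i = w r xs" using bv_nth[of blk i d "\<lambda>r. w r xs"] blk_range bi r unfolding Wv_def by simp
    show "0 \<le> w r xs" using Wb0 e by metis
  qed
  define g where "g t = block_vec blk d (\<lambda>r. a r (x t)) * F (x t)" for t
  define wn where "wn u v = (u * Wv) \<bullet> v" for u v
  define D where "D t = wn (xh t - xs) (xh t - xs)" for t
  define na where "na t = norm (x t - xh t)" for t
  define nb where "nb t = norm (x t - xh (t+1))" for t
  have step: "\<eta> * wn (g t) (x t - xs) \<le> 1/2 * (D t - D (t+1)) - l/2 * (na t^2 + nb t^2)
      + l/4 * (na t^2 + nb (t-1)^2)" if t1: "1 \<le> t" for t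
  proof -
    have sx: "x t = closest_point X (xh t - \<eta> *\<^sub>R g (t-1))"
      using step_x[rule_format, OF t1] unfolding g_def X_def by simp
    have sxh: "xh (t+1) = closest_point X (xh t - \<eta> *\<^sub>R g t)"
      using step_xh[rule_format, OF t1] unfolding g_def X_def by simp
    have VI1: "((xh t - \<eta> *\<^sub>R g t - xh (t+1)) * Wv) \<bullet> (xs - xh (t+1)) \<le> 0"
      unfolding sxh Wv_def using weighted_vi[OF blk_range cvX clX X_def xsX w0] by simp
    have VI2: "((xh t - \<eta> *\<^sub>R g (t-1) - x t) * Wv) \<bullet> (xh (t+1) - x t) \<le> 0"
      unfolding sx Wv_def using weighted_vi[OF blk_range cvX clX X_def xhX[of "t+1"] w0] by simp
    have main: "\<eta> * wn (g t) (x t - xs) \<le> 1/2 * (D t - D (t+1))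
      - 1/2 * (wn (x t - xh t) (x t - xh t) + wn (x t - xh (t+1)) (x t - xh (t+1)))
      + \<eta> * wn (g t - g (t-1)) (x t - xh (t+1))"
      using step_ineq[OF VI1 VI2] unfolding wn_def D_def by simp
    have la: "l * na t^2 \<le> wn (x t - xh t) (x t - xh t)" unfolding wn_def na_def
      using wn_lower Wb by blast
    have lb: "l * nb t^2 \<le> wn (x t - xh (t+1)) (x t - xh (t+1))" unfolding wn_def nb_def
      using wn_lower Wb by blast
    define Dg where "Dg = g t - g (t-1)"
    have e1: "wn Dg (x t - xh (t+1)) \<le> h * norm Dg * nb t"
      unfolding wn_def nb_def using wn_cs[OF Wb0] by blast
    have "nb t = dist (closest_point X (xh t - \<eta> *\<^sub>R g (t-1))) (closest_point X (xh t - \<eta> *\<^sub>R g t))"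
      unfolding nb_def sx[symmetric] sxh[symmetric] by (simp add: dist_norm)
    also have "\<dots> \<le> dist (xh t - \<eta> *\<^sub>R g (t-1)) (xh t - \<eta> *\<^sub>R g t)"
      by (rule closest_point_lipschitz[OF cvX clX neX])
    also have "\<dots> = \<eta> * norm Dg"
    proof -
      have "(xh t - \<eta> *\<^sub>R g (t-1)) - (xh t - \<eta> *\<^sub>R g t) = \<eta> *\<^sub>R Dg"
        unfolding Dg_def by (simp add: scaleR_diff_right)
      then show ?thesis using \<eta>_pos by (simp add: dist_norm)
    qed
    finally have nbD: "nb t \<le> \<eta> * norm Dg" .
    have "\<eta> * wn Dg (x t - xh (t+1)) \<le> \<eta> * (h * norm Dg * (\<eta> * norm Dg))"
    proof -
      have "\<eta> * wn Dg (x t - xh (t+1)) \<le> \<eta> * (h * norm Dg * nb t)"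
        using e1 \<eta>_pos by (intro mult_left_mono) auto
      also have "\<dots> \<le> \<eta> * (h * norm Dg * (\<eta> * norm Dg))"
        using nbD \<eta>_pos h0 by (intro mult_left_mono) auto
      finally show ?thesis .
    qed
    also have "\<dots> = \<eta>^2 * h * norm Dg^2" by (simp add: power2_eq_square)
    also have "\<dots> \<le> \<eta>^2 * h * (2 * (h^2 * L^2 + \<alpha>^2 * B^2 * real d) * norm (x t - x (t-1))^2)"
    proof (intro mult_left_mono)
      have Ab: "\<forall>i. 0 \<le> block_vec blk d (\<lambda>r. a r (x t)) $ i \<and> block_vec blk d (\<lambda>r. a r (x t)) $ i \<le> h"
      proof
        fix i
        have "l \<le> block_vec blk d (\<lambda>r. a r (x t)) $ i \<and> block_vec blk d (\<lambda>r. a r (x t)) $ i \<le> h"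
          using A_bounds xX[of t] unfolding X_def by blast
        then show "0 \<le> block_vec blk d (\<lambda>r. a r (x t)) $ i \<and> block_vec blk d (\<lambda>r. a r (x t)) $ i \<le> h"
          using l_pos by linarith
      qed
      have FL: "norm (F (x t) - F (x (t-1))) \<le> L * norm (x t - x (t-1))"
        using F_lip xX unfolding X_def lipschitz_on_def dist_norm by blast
      have aL: "\<forall>r\<in>{1..d}. \<bar>a r (x t) - a r (x (t-1))\<bar> \<le> \<alpha> * norm (x t - x (t-1))"
        using a_lip xX unfolding X_def lipschitz_on_def dist_real_def dist_norm by blast
      have Bd': "\<forall>r\<in>{1..d}. norm (block_proj blk r (F (x (t-1)))) \<le> B" using Bd xX by blast
      show "norm Dg^2 \<le> 2 * (h^2 * L^2 + \<alpha>^2 * B^2 * real d) * norm (x t - x (t-1))^2"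
        unfolding Dg_def g_def using dg_bound[OF blk_range Ab FL aL Bd' _ L0 a0] h0 by simp
    qed (use h0 in simp)
    also have "\<dots> = 2 * \<eta>^2 * M * norm (x t - x (t-1))^2" unfolding M_def
      by (simp add: power3_eq_cube power2_eq_square distrib_left distrib_right mult_ac)
    also have "\<dots> \<le> l/8 * (2 * (na t^2 + nb (t-1)^2))"
    proof -
      have "norm (x t - x (t-1)) \<le> na t + nb (t-1)"
        using norm_triangle_ineq[of "x t - xh t" "xh t - x (t-1)"] t1
        unfolding na_def nb_def by (simp add: norm_minus_commute)
      then have "norm (x t - x (t-1))^2 \<le> (na t + nb (t-1))^2" by (simp add: power_mono)
      also have "\<dots> \<le> 2 * (na t^2 + nb (t-1)^2)" by (rule sq_sum_le)
      finally have n2: "norm (x t - x (t-1))^2 \<le> 2 * (na t^2 + nb (t-1)^2)" .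
      have "2 * \<eta>^2 * M \<le> l/8" using eta_M by simp
      moreover have "0 \<le> 2 * \<eta>^2 * M" unfolding M_def using h0 by simp
      ultimately have "2 * \<eta>^2 * M * norm (x t - x (t-1))^2 \<le> l/8 * norm (x t - x (t-1))^2"
        by (intro mult_right_mono) auto
      also have "\<dots> \<le> l/8 * (2 * (na t^2 + nb (t-1)^2))"
        using n2 l_pos by (intro mult_left_mono) auto
      finally show ?thesis .
    qed
    finally have err0: "\<eta> * wn Dg (x t - xh (t+1)) \<le> l/8 * (2 * (na t^2 + nb (t-1)^2))" .
    have "l/8 * (2 * (na t^2 + nb (t-1)^2)) = l/4 * (na t^2 + nb (t-1)^2)" by simp
    with err0 have err: "\<eta> * wn Dg (x t - xh (t+1)) \<le> l/4 * (na t^2 + nb (t-1)^2)" by linarith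
    show ?thesis using step_arith[OF main la lb err[unfolded Dg_def]] by simp
  qed
  have S0: "0 \<le> (\<Sum>t=1..T. \<eta> * wn (g t) (x t - xs))"
  proof -
    have "(\<Sum>t=1..T. \<eta> * wn (g t) (x t - xs)) = \<eta> * (\<Sum>t=1..T. (x t - xs) \<bullet>
           (F (x t) * block_vec blk d (\<lambda>r. a r (x t)) * block_vec blk d (\<lambda>r. w r xs)))"
      unfolding sum_distrib_left wn_def g_def Wv_def
      by (intro sum.cong refl) (simp add: inner_commute mult_ac)
    then show ?thesis using minT \<eta>_pos by simp
  qed
  also have "\<dots> \<le> (\<Sum>t=1..T. 1/2 * (D t - D (t+1)) - l/2 * (na t^2 + nb t^2)
      + l/4 * (na t^2 + nb (t-1)^2))"
    using step by (intro sum_mono) auto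
  also have "\<dots> = 1/2 * (D 1 - D (T+1)) - l/2 * (\<Sum>t=1..T. na t^2 + nb t^2)
      + l/4 * ((\<Sum>t=1..T. na t^2) + (\<Sum>t=1..T. nb (t-1)^2))"
    by (simp only: sum.distrib sum_subtractf sum_distrib_left[symmetric] telescope_sum[unfolded sum_subtractf])
  finally have ineq: "0 \<le> 1/2 * (D 1 - D (T+1)) - l/2 * (\<Sum>t=1..T. na t^2 + nb t^2)
      + l/4 * ((\<Sum>t=1..T. na t^2) + (\<Sum>t=1..T. nb (t-1)^2))" .
  have shift: "(\<Sum>t=1..T. nb (t-1)^2) \<le> (\<Sum>t=1..T. nb t^2)"
    by (rule shift_sum) (auto simp: nb_def xh1[unfolded One_nat_def])
  have DT: "0 \<le> D (T+1)"
  proof -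
    have "l * norm (xh (T+1) - xs)^2 \<le> ((xh (T+1) - xs) * Wv) \<bullet> (xh (T+1) - xs)"
      using wn_lower[of l Wv "xh (T+1) - xs"] Wb by blast
    moreover have "0 \<le> l * norm (xh (T+1) - xs)^2" using l_pos by simp
    ultimately show ?thesis unfolding D_def wn_def by linarith
  qed
  have D1: "D 1 \<le> h * diameter X ^2"
  proof -
    have "D 1 \<le> h * norm (xh 1 - xs)^2" unfolding D_def wn_def using wn_upper[OF Wb0] by blast
    also have "\<dots> \<le> h * diameter X ^2"
    proof -
      have "norm (xh 1 - xs) \<le> diameter X"
        using diameter_bounded_bound[OF bdX xhX[of 1] xsX] by (simp add: dist_norm)
      then show ?thesis using h0 by (intro mult_left_mono power_mono) auto
    qed
    finally show ?thesis .
  qed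
  have "l/4 * (\<Sum>t=1..T. na t^2 + nb t^2) \<le> 1/2 * (h * diameter X ^2)"
  proof -
    have "(\<Sum>t=1..T. na t^2 + nb t^2) = (\<Sum>t=1..T. na t^2) + (\<Sum>t=1..T. nb t^2)"
      by (rule sum.distrib)
    then show ?thesis using final_arith[OF _ shift DT D1 l_pos] ineq by simp
  qed
  then have "(\<Sum>t=1..T. na t^2 + nb t^2) \<le> 2 * diameter X ^2 * h / l"
    using l_pos by (simp add: field_simps)
  then show "(\<Sum>t=1..T. norm (x t - xh t)^2 + norm (x t - xh (t + 1))^2)
           \<le> 2 * (diameter (block_prod blk d Z))^2 * h / l"
    unfolding na_def nb_def X_def by simp
qed

end
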